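(* Let $\{\rho_n\},\{\tilde\rho_n\}\subset[-1,1]$ satisfy $\rho_n\to1$, $\tilde\rho_n\to1$ and $1-\tilde\rho_n=\Theta(1-\rho_n)$. Then for all sufficiently large $n$ there exist $\mathbf{x}_1,\mathbf{x}_2\in\mathbb{R}^n$ with $\|\mathbf{x}_1\|_2^2=nS_1$, $\|\mathbf{x}_2\|_2^2=nS_2$, $\frac{\langle\mathbf{x}_1,\mathbf{x}_2\rangle}{\|\mathbf{x}_1\|_2\|\mathbf{x}_2\|_2}=\tilde\rho_n$, such that $$\tilde T_{1,n}:=\sum_{i=1}^n\mathbb{E}\Big[\Big|\tfrac{1}{\sqrt n}\big(j_1(x_{1i},x_{2i},Y_i)-\mathbb{E}[j_1(x_{1i},x_{2i},Y_i)]\big)\Big|^3\Big]=O\Big(\frac{1-\tilde\rho_n}{\sqrt n}\Big),$$ where $Y_i=x_{1i}+x_{2i}+Z_i$ with $Z_i$ i.i.d. $\mathcal{N}(0,1)$ and $j_1$ is the information density defined with parameter $\rho=\rho_n$.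
   Context: $S_1,S_2>0$ fixed; logarithms natural. $W(y|x_1,x_2)=\frac{1}{\sqrt{2\pi}}\exp(-\frac12(y-x_1-x_2)^2)$. For a parameter $\rho\in[-1,1]$: $Q_{Y|X_2}(y|x_2):=\mathcal{N}(y;x_2(1+\rho\sqrt{S_1/S_2}),1+S_1(1-\rho^2))$ and $j_1(x_1,x_2,y):=\log\frac{W(y|x_1,x_2)}{Q_{Y|X_2}(y|x_2)}$. *)

theory Defs
  imports "HOL-Probability.Probability" "HOL-Library.Landau_Symbols"
begin

definition W :: "real \<Rightarrow> real \<Rightarrow> real \<Rightarrow> real" where
  "W y x1 x2 = normal_density (x1 + x2) 1 y"

text \<open>Q_{Y|X2}(y|x2) = N(y; x2(1+rho sqrt(S1/S2)), 1+S1(1-rho^2)); the second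
  argument of normal_density is the standard deviation.\<close>
definition QYX2 :: "real \<Rightarrow> real \<Rightarrow> real \<Rightarrow> real \<Rightarrow> real \<Rightarrow> real" where
  "QYX2 S1 S2 \<rho> y x2 =
     normal_density (x2 * (1 + \<rho> * sqrt (S1 / S2))) (sqrt (1 + S1 * (1 - \<rho>\<^sup>2))) y"

definition j1 :: "real \<Rightarrow> real \<Rightarrow> real \<Rightarrow> real \<Rightarrow> real \<Rightarrow> real \<Rightarrow> real" where
  "j1 S1 S2 \<rho> x1 x2 y = ln (W y x1 x2 / QYX2 S1 S2 \<rho> y x2)"

definition Ej1 :: "real \<Rightarrow> real \<Rightarrow> real \<Rightarrow> real \<Rightarrow> real \<Rightarrow> real" where
  "Ej1 S1 S2 \<rho> x1 x2 =
     (LINT z|lborel. std_normal_density z * j1 S1 S2 \<rho> x1 x2 (x1 + x2 + z))"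

text \<open>Vectors in R^n are represented as functions nat => real, coordinates i < n
  (0-based). tildeT_{1,n}.\<close>
definition T1 :: "real \<Rightarrow> real \<Rightarrow> real \<Rightarrow> nat \<Rightarrow> (nat \<Rightarrow> real) \<Rightarrow> (nat \<Rightarrow> real) \<Rightarrow> real" where
  "T1 S1 S2 \<rho> n x1 x2 =
     (\<Sum>i<n. LINT z|lborel. std_normal_density z *
        \<bar>(1 / sqrt (real n)) * (j1 S1 S2 \<rho> (x1 i) (x2 i) (x1 i + x2 i + z)
                                 - Ej1 S1 S2 \<rho> (x1 i) (x2 i))\<bar> ^ 3)"

definition sqnorm :: "nat \<Rightarrow> (nat \<Rightarrow> real) \<Rightarrow> real" where
  "sqnorm n x = (\<Sum>i<n. (x i)\<^sup>2)"

definition inprod :: "nat \<Rightarrow> (nat \<Rightarrow> real) \<Rightarrow> (nat \<Rightarrow> real) \<Rightarrow> real" where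
  "inprod n x y = (\<Sum>i<n. x i * y i)"

end

theory Submission
  imports Defs
begin

lemma poly_id:
  fixes d z sv :: real assumes "sv > 0"
  shows "- z\<^sup>2 / 2 + (d+z)\<^sup>2 / (2 * sv) = ((1/sv - 1)/2) * z\<^sup>2 + (d/sv) * z + d\<^sup>2/(2 * sv)"
  using assms by (simp add: field_simps power2_eq_square)
lemma ln_id:
  fixes a E :: real assumes "a > 0"
  shows "ln (a * exp E) = E + ln a"
  using assms by (simp add: ln_mult)

lemma ratio_aux:
  fixes a b P R :: real
  assumes "a > 0" "b > 0" "P > 0" "R > 0"
  shows "1 / a * P / (1 / (a * b) * R) = b * (P / R)"
  using assms by (simp add: field_simps)

lemma j1_formula:
  fixes S1 S2 r x1 x2 z :: real
  assumes "S1 > 0" "S2 > 0" "r \<in> {-1..1}"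
  defines "sv \<equiv> 1 + S1 * (1 - r\<^sup>2)"
  defines "d \<equiv> x1 - x2 * r * sqrt (S1 / S2)"
  shows "j1 S1 S2 r x1 x2 (x1 + x2 + z) =
     ((1/sv - 1)/2) * z\<^sup>2 + (d/sv) * z + (d\<^sup>2/(2 * sv) + ln (sqrt sv))"
proof -
  have r2: "r\<^sup>2 \<le> 1" using assms(3) by (simp add: abs_square_le_1 abs_le_iff)
  have svpos: "sv > 0" unfolding sv_def using r2 assms(1)
    by (smt (verit) mult_nonneg_nonneg)
  have sq: "(sqrt sv)\<^sup>2 = sv" using svpos by simp
  have e: "x1 + x2 + z - x2 * (1 + r * sqrt (S1 / S2)) = d + z"
    unfolding d_def by (simp add: algebra_simps)
  have W: "W (x1 + x2 + z) x1 x2 = 1 / sqrt (2*pi) * exp (- z\<^sup>2 / 2)"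
    unfolding W_def normal_density_def by simp
  have Q: "QYX2 S1 S2 r (x1 + x2 + z) x2 = 1 / sqrt (2*pi * sv) * exp (-(d+z)\<^sup>2 / (2 * sv))"
    unfolding QYX2_def normal_density_def e by (simp only: sv_def[symmetric] sq)
  have ratio: "W (x1 + x2 + z) x1 x2 / QYX2 S1 S2 r (x1 + x2 + z) x2
      = sqrt sv * exp (- z\<^sup>2 / 2 + (d+z)\<^sup>2 / (2 * sv))"
  proof -
    have a: "sqrt (2*pi * sv) = sqrt (2*pi) * sqrt sv" by (simp add: real_sqrt_mult)
    have p: "sqrt (2*pi) > 0" "sqrt sv > 0" using svpos by auto
    have "1 / sqrt (2*pi) * exp (- z\<^sup>2 / 2) / (1 / sqrt (2*pi * sv) * exp (-(d+z)\<^sup>2 / (2 * sv)))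
       = sqrt sv * (exp (- z\<^sup>2 / 2) / exp (-(d+z)\<^sup>2 / (2 * sv)))"
      unfolding a using p by (rule ratio_aux) simp_all
    also have "\<dots> = sqrt sv * exp (- z\<^sup>2 / 2 + (d+z)\<^sup>2 / (2 * sv))"
      by (simp add: exp_diff[symmetric])
    finally show ?thesis unfolding W Q .
  qed
  have "- z\<^sup>2 / 2 + (d+z)\<^sup>2 / (2 * sv) = ((1/sv - 1)/2) * z\<^sup>2 + (d/sv) * z + d\<^sup>2/(2 * sv)"
    using svpos by (rule poly_id)
  moreover have "ln (sqrt sv * exp (- z\<^sup>2 / 2 + (d+z)\<^sup>2 / (2 * sv))) = - z\<^sup>2 / 2 + (d+z)\<^sup>2 / (2 * sv) + ln (sqrt sv)"
    using svpos by (intro ln_id) simp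
  ultimately show ?thesis unfolding j1_def ratio by simp
qed


lemma hb0: "has_bochner_integral lborel (\<lambda>z. std_normal_density z) 1"
proof -
  have e: "integral\<^sup>L lborel (normal_density 0 1) = 1"
    using integral_normal_density[of 0 1] by (simp add: eta_contract_eq)
  show ?thesis using has_bochner_integral_integrable[OF integrable_normal_density[of 1 0]] unfolding e by simp
qed
lemma hb2: "has_bochner_integral lborel (\<lambda>z. std_normal_density z * z ^ 2) 1"
    using std_normal_moment_even[of 1] by simp
lemma hb1: "has_bochner_integral lborel (\<lambda>z. std_normal_density z * z) 0"
    using std_normal_moment_odd[of 0] by simp
lemma hb6: "has_bochner_integral lborel (\<lambda>z. std_normal_density z * z ^ 6) 15"
    using std_normal_moment_even[of 3] by (simp add: fact_numeral)
lemma hb4: "has_bochner_integral lborel (\<lambda>z. std_normal_density z * z ^ 4) 3"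
    using std_normal_moment_even[of 2] by (simp add: fact_numeral)

lemma hbi_lin3:
  fixes f g h :: "real \<Rightarrow> real"
  assumes "has_bochner_integral M f a" "has_bochner_integral M g b" "has_bochner_integral M h e"
  shows "has_bochner_integral M (\<lambda>z. A * f z + B * g z + C * h z) (A * a + B * b + C * e)"
proof -
  have 1: "has_bochner_integral M (\<lambda>z. A * f z) (A * a)"
    by (rule has_bochner_integral_mult_right) (rule assms(1))
  have 2: "has_bochner_integral M (\<lambda>z. B * g z) (B * b)"
    by (rule has_bochner_integral_mult_right) (rule assms(2))
  have 3: "has_bochner_integral M (\<lambda>z. C * h z) (C * e)"
    by (rule has_bochner_integral_mult_right) (rule assms(3))
  show ?thesis by (rule has_bochner_integral_add[OF has_bochner_integral_add[OF 1 2] 3])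
qed
lemma hbi_lin4:
  fixes f g h k :: "real \<Rightarrow> real"
  assumes "has_bochner_integral M f a" "has_bochner_integral M g b" "has_bochner_integral M h e"
    "has_bochner_integral M k q"
  shows "has_bochner_integral M (\<lambda>z. A * f z + B * g z + C * h z + D * k z) (A * a + B * b + C * e + D * q)"
proof -
  have "has_bochner_integral M (\<lambda>z. A * f z + B * g z + C * h z) (A * a + B * b + C * e)"
    by (rule hbi_lin3[OF assms(1-3)])
  moreover have "has_bochner_integral M (\<lambda>z. D * k z) (D * q)"
    by (rule has_bochner_integral_mult_right) (rule assms(4))
  ultimately show ?thesis by (rule has_bochner_integral_add)
qed

lemma hbi_poly2:
  "has_bochner_integral lborel (\<lambda>z. std_normal_density z * (A * z\<^sup>2 + B * z + C)) (A + C)"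
proof -
  have "has_bochner_integral lborel (\<lambda>z. A * (std_normal_density z * z ^ 2) + B * (std_normal_density z * z)
      + C * std_normal_density z) (A * 1 + B * 0 + C * 1)"
    by (rule hbi_lin3[OF hb2 hb1 hb0])
  then show ?thesis by (simp add: algebra_simps)
qed

lemma poly6_pt:
  fixes z c :: real
  shows "c * (f z * z ^ 6) + 3 * c * (f z * z ^ 4) + 3 * c * (f z * z ^ 2) + c * f z
      = f z * (c * (z\<^sup>2 + 1) ^ 3)"
proof -
  have "(z\<^sup>2 + 1) ^ 3 = z ^ 6 + 3 * z ^ 4 + 3 * z ^ 2 + 1" by algebra
  then show ?thesis by (simp add: distrib_left mult.assoc mult.left_commute)
qed

lemma hbi_poly6:
  "has_bochner_integral lborel (\<lambda>z. std_normal_density z * (c * (z\<^sup>2 + 1) ^ 3)) (28 * c)"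
proof -
  have H: "has_bochner_integral lborel (\<lambda>z. c * (std_normal_density z * z ^ 6) + 3 * c * (std_normal_density z * z ^ 4)
      + 3 * c * (std_normal_density z * z ^ 2) + c * std_normal_density z) (c * 15 + 3 * c * 3 + 3 * c * 1 + c * 1)"
    by (rule hbi_lin4[OF hb6 hb4 hb2 hb0])
  have N: "c * (15::real) + 3 * c * 3 + 3 * c * 1 + c * 1 = 28 * c" by simp
  show ?thesis using H unfolding poly6_pt N .
qed

lemma Ej1_formula:
  fixes S1 S2 r x1 x2 :: real
  assumes "S1 > 0" "S2 > 0" "r \<in> {-1..1}"
  defines "sv \<equiv> 1 + S1 * (1 - r\<^sup>2)"
  defines "d \<equiv> x1 - x2 * r * sqrt (S1 / S2)"
  shows "Ej1 S1 S2 r x1 x2 = ((1/sv - 1)/2) + (d\<^sup>2/(2 * sv) + ln (sqrt sv))"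
proof -
  have "Ej1 S1 S2 r x1 x2 = (LINT z|lborel. std_normal_density z *
     (((1/sv - 1)/2) * z\<^sup>2 + (d/sv) * z + (d\<^sup>2/(2 * sv) + ln (sqrt sv))))"
    unfolding Ej1_def j1_formula[OF assms(1-3)] sv_def d_def ..
  also have "\<dots> = ((1/sv - 1)/2) + (d\<^sup>2/(2 * sv) + ln (sqrt sv))"
    by (rule has_bochner_integral_integral_eq[OF hbi_poly2])
  finally show ?thesis .
qed

lemma cube_bound:
  fixes k A B :: real
  shows "(LINT z|lborel. std_normal_density z * \<bar>k * (A * (z\<^sup>2 - 1) + B * z)\<bar> ^ 3)
     \<le> 28 * (\<bar>k\<bar> * (\<bar>A\<bar> + \<bar>B\<bar>)) ^ 3"
proof -
  define c where "c = (\<bar>k\<bar> * (\<bar>A\<bar> + \<bar>B\<bar>)) ^ 3"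
  have pw: "\<bar>k * (A * (z\<^sup>2 - 1) + B * z)\<bar> ^ 3 \<le> c * (z\<^sup>2 + 1) ^ 3" for z
  proof -
    have a: "\<bar>z\<^sup>2 - 1\<bar> \<le> z\<^sup>2 + 1" by (simp add: abs_le_iff)
    have b: "\<bar>z\<bar> \<le> z\<^sup>2 + 1"
    proof -
      have "z\<^sup>2 = \<bar>z\<bar>\<^sup>2" by simp
      moreover have "(\<bar>z\<bar> - 1/2)\<^sup>2 = \<bar>z\<bar>\<^sup>2 - \<bar>z\<bar> + 1/4"
        by (simp add: power2_eq_square algebra_simps)
      moreover have "0 \<le> (\<bar>z\<bar> - 1/2)\<^sup>2" by simp
      ultimately show ?thesis by linarith
    qed
    have "\<bar>A * (z\<^sup>2 - 1) + B * z\<bar> \<le> \<bar>A\<bar> * (z\<^sup>2 + 1) + \<bar>B\<bar> * (z\<^sup>2 + 1)"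
    proof -
      have "\<bar>A * (z\<^sup>2 - 1) + B * z\<bar> \<le> \<bar>A\<bar> * \<bar>z\<^sup>2 - 1\<bar> + \<bar>B\<bar> * \<bar>z\<bar>"
        using abs_triangle_ineq[of "A * (z\<^sup>2 - 1)" "B * z"] by (simp add: abs_mult)
      moreover have "\<bar>A\<bar> * \<bar>z\<^sup>2 - 1\<bar> \<le> \<bar>A\<bar> * (z\<^sup>2 + 1)"
        using a by (rule mult_left_mono) simp
      moreover have "\<bar>B\<bar> * \<bar>z\<bar> \<le> \<bar>B\<bar> * (z\<^sup>2 + 1)"
        using b by (rule mult_left_mono) simp
      ultimately show ?thesis by linarith
    qed
    then have "\<bar>k * (A * (z\<^sup>2 - 1) + B * z)\<bar> \<le> \<bar>k\<bar> * (\<bar>A\<bar> + \<bar>B\<bar>) * (z\<^sup>2 + 1)"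
      by (simp add: abs_mult mult_left_mono distrib_right mult.assoc)
    then have "\<bar>k * (A * (z\<^sup>2 - 1) + B * z)\<bar> ^ 3 \<le> (\<bar>k\<bar> * (\<bar>A\<bar> + \<bar>B\<bar>) * (z\<^sup>2 + 1)) ^ 3"
      by (rule power_mono) simp
    then show ?thesis unfolding c_def by (simp add: power_mult_distrib)
  qed
  have c0: "c \<ge> 0" unfolding c_def by simp
  have int2: "integrable lborel (\<lambda>z. std_normal_density z * (c * (z\<^sup>2 + 1) ^ 3))"
    using hbi_poly6[of c] by (rule integrable.intros)
  have int1: "integrable lborel (\<lambda>z. std_normal_density z * \<bar>k * (A * (z\<^sup>2 - 1) + B * z)\<bar> ^ 3)"
  proof (rule Bochner_Integration.integrable_bound[OF int2])
    show "(\<lambda>z. std_normal_density z * \<bar>k * (A * (z\<^sup>2 - 1) + B * z)\<bar> ^ 3) \<in> borel_measurable lborel"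
      by measurable
    show "AE z in lborel. norm (std_normal_density z * \<bar>k * (A * (z\<^sup>2 - 1) + B * z)\<bar> ^ 3)
        \<le> norm (std_normal_density z * (c * (z\<^sup>2 + 1) ^ 3))"
    proof (rule AE_I2)
      fix z
      have "0 \<le> \<bar>k * (A * (z\<^sup>2 - 1) + B * z)\<bar> ^ 3" by simp
      then show "norm (std_normal_density z * \<bar>k * (A * (z\<^sup>2 - 1) + B * z)\<bar> ^ 3)
        \<le> norm (std_normal_density z * (c * (z\<^sup>2 + 1) ^ 3))"
        using pw[of z] c0 by (simp add: abs_mult mult_left_mono)
    qed
  qed
  have "(LINT z|lborel. std_normal_density z * \<bar>k * (A * (z\<^sup>2 - 1) + B * z)\<bar> ^ 3)
     \<le> (LINT z|lborel. std_normal_density z * (c * (z\<^sup>2 + 1) ^ 3))"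
    by (rule integral_mono[OF int1 int2]) (simp add: mult_left_mono pw)
  also have "\<dots> = 28 * c" by (rule has_bochner_integral_integral_eq[OF hbi_poly6])
  finally show ?thesis unfolding c_def .
qed


lemma AB_bound:
  fixes S1 K r t u :: real
  assumes S1: "S1 > 0" and K: "K > 0" and r: "r \<in> {-1..1}" and t: "t \<in> {-1..1}"
    and u: "\<bar>u\<bar> \<le> sqrt 2" and rK: "1 - r \<le> K * (1 - t)"
  shows "\<bar>(1 / (1 + S1 * (1 - r\<^sup>2)) - 1) / 2\<bar> + \<bar>sqrt S1 * (1 - r * t - r * sqrt (1 - t\<^sup>2) * u) / (1 + S1 * (1 - r\<^sup>2))\<bar>
     \<le> (S1 * K * sqrt 2 + sqrt S1 * (K * sqrt 2 + sqrt 2 + 2)) * sqrt (1 - t)"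
proof -
  define sv where "sv = 1 + S1 * (1 - r\<^sup>2)"
  define s where "s = sqrt (1 - t\<^sup>2)"
  define e where "e = 1 - t"
  have r1: "-1 \<le> r" "r \<le> 1" and t1: "-1 \<le> t" "t \<le> 1" using r t by auto
  have r2: "r\<^sup>2 \<le> 1" using r1 by (simp add: abs_square_le_1 abs_le_iff)
  have t2: "t\<^sup>2 \<le> 1" using t1 by (simp add: abs_square_le_1 abs_le_iff)
  have e0: "e \<ge> 0" "e \<le> 2" unfolding e_def using t1 by auto
  have sv1: "sv \<ge> 1" unfolding sv_def using r2 S1 by simp
  have svm1: "sv - 1 = S1 * ((1 - r) * (1 + r))" unfolding sv_def by (simp add: power2_eq_square algebra_simps)
  have "(1 - r) * (1 + r) \<le> (1 - r) * 2" using r1 by (intro mult_left_mono) auto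
  from this have "S1 * ((1 - r) * (1 + r)) \<le> S1 * ((1 - r) * 2)" by (rule mult_left_mono) (use S1 in auto)
  then have svm2: "sv - 1 \<le> 2 * S1 * (1 - r)" using svm1 by (simp add: algebra_simps)
  have A: "\<bar>(1 / sv - 1) / 2\<bar> \<le> S1 * (1 - r)"
  proof -
    have p: "1 / sv \<le> 1" "1 / sv > 0" using sv1 by auto
    have "(sv - 1) * 1 \<le> (sv - 1) * sv" using sv1 by (intro mult_left_mono) auto
    then have "1 - 1 / sv \<le> sv - 1" using sv1 by (simp add: field_simps)
    moreover have "\<bar>(1 / sv - 1) / 2\<bar> = (1 - 1 / sv) / 2" using p by (simp add: abs_if field_simps)
    ultimately have "\<bar>(1 / sv - 1) / 2\<bar> \<le> (sv - 1) / 2" by simp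
    also have "\<dots> \<le> S1 * (1 - r)" using svm2 by simp
    finally show ?thesis .
  qed
  define d where "d = 1 - r * t - r * s * u"
  have s0: "s \<ge> 0" unfolding s_def using t2 by simp
  have rsu: "\<bar>r * s * u\<bar> \<le> s * sqrt 2"
  proof -
    have "\<bar>r\<bar> * \<bar>u\<bar> \<le> 1 * sqrt 2" using r1 u by (intro mult_mono) auto
    then have "s * (\<bar>r\<bar> * \<bar>u\<bar>) \<le> s * sqrt 2" using s0 by (intro mult_left_mono) auto
    then show ?thesis using s0 by (simp add: abs_mult mult.commute mult.left_commute)
  qed
  have rt: "\<bar>1 - r * t\<bar> \<le> (1 - r) + e"
  proof -
    have "1 - r * t = (1 - r) + r * (1 - t)" by (simp add: algebra_simps)
    moreover have "\<bar>r * (1 - t)\<bar> \<le> 1 - t" using r1 t1 mult_right_mono[of "\<bar>r\<bar>" 1 "1 - t"] by (simp add: abs_mult)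
    ultimately show ?thesis unfolding e_def using r1 by (smt (verit))
  qed
  have s2: "s * sqrt 2 \<le> 2 * sqrt e"
  proof -
    have "s * sqrt 2 = sqrt (2 * (1 - t\<^sup>2))" unfolding s_def by (simp only: real_sqrt_mult mult.commute)
    also have "\<dots> \<le> sqrt (4 * e)"
    proof (rule real_sqrt_le_mono)
      have "1 - t\<^sup>2 = (1 - t) * (1 + t)" by (simp add: power2_eq_square algebra_simps)
      also have "\<dots> \<le> (1 - t) * 2" using t1 by (intro mult_left_mono) auto
      finally show "2 * (1 - t\<^sup>2) \<le> 4 * e" unfolding e_def by simp
    qed
    also have "\<dots> = 2 * sqrt e" by (simp add: real_sqrt_mult)
    finally show ?thesis .
  qed
  have dB: "\<bar>d\<bar> \<le> (1 - r) + e + 2 * sqrt e"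
    unfolding d_def using rt rsu s2 by (smt (verit))
  have ee: "e \<le> sqrt 2 * sqrt e"
  proof -
    have "e = sqrt e * sqrt e" using e0 by simp
    also have "\<dots> \<le> sqrt 2 * sqrt e" using e0 by (intro mult_right_mono) auto
    finally show ?thesis .
  qed
  have r1K: "1 - r \<le> K * sqrt 2 * sqrt e"
  proof -
    have "K * e \<le> K * (sqrt 2 * sqrt e)" using K ee by (intro mult_left_mono) auto
    then show ?thesis using rK unfolding e_def by (simp add: mult.assoc)
  qed
  have B: "\<bar>sqrt S1 * d / sv\<bar> \<le> sqrt S1 * (K * sqrt 2 * sqrt e + sqrt 2 * sqrt e + 2 * sqrt e)"
  proof -
    have "\<bar>sqrt S1 * d / sv\<bar> = sqrt S1 * \<bar>d\<bar> / sv" using sv1 S1 by (simp add: abs_mult)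
    also have "\<dots> \<le> sqrt S1 * \<bar>d\<bar>"
    proof -
      have "sqrt S1 * \<bar>d\<bar> * 1 \<le> sqrt S1 * \<bar>d\<bar> * sv" using sv1 S1 by (intro mult_left_mono) auto
      then show ?thesis using sv1 by (simp add: divide_le_eq)
    qed
    also have "\<dots> \<le> sqrt S1 * (K * sqrt 2 * sqrt e + sqrt 2 * sqrt e + 2 * sqrt e)"
      using dB r1K ee S1 by (intro mult_left_mono) auto
    finally show ?thesis .
  qed
  have A2: "\<bar>(1 / sv - 1) / 2\<bar> \<le> S1 * (K * sqrt 2 * sqrt e)"
    using A r1K S1 by (smt (verit) mult_left_mono)
  have eq: "S1 * (K * sqrt 2 * sqrt e) + sqrt S1 * (K * sqrt 2 * sqrt e + sqrt 2 * sqrt e + 2 * sqrt e)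
     = (S1 * K * sqrt 2 + sqrt S1 * (K * sqrt 2 + sqrt 2 + 2)) * sqrt e"
    by (simp add: algebra_simps)
  show ?thesis using A2 B eq unfolding sv_def[symmetric] s_def[symmetric] d_def[symmetric] e_def[symmetric]
    by (simp add: mult.assoc)
qed


definition uu :: "nat \<Rightarrow> nat \<Rightarrow> real" where
  "uu n i = (if i < 2 * (n div 2) then (-1) ^ i * sqrt (real n / real (2 * (n div 2))) else 0)"

lemma sum_alt: "(\<Sum>i<2 * k. (-1::real) ^ i * c) = 0"
proof (induction k)
  case 0 then show ?case by simp
next
  case (Suc k)
  have "2 * Suc k = Suc (Suc (2 * k))" by simp
  then show ?case using Suc by (simp add: sum.lessThan_Suc)
qed

lemma sum_if_less:
  fixes g :: "nat \<Rightarrow> real"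
  assumes "m \<le> n"
  shows "(\<Sum>i<n. if i < m then g i else 0) = (\<Sum>i<m. g i)"
proof -
  have "(\<Sum>i<n. if i < m then g i else 0) = (\<Sum>i\<in>{i \<in> {..<n}. i < m}. g i)"
    by (rule sum.inter_filter[OF finite_lessThan, symmetric])
  also have "{i \<in> {..<n}. i < m} = {..<m}" using assms by auto
  finally show ?thesis .
qed

lemma uu_sum: "(\<Sum>i<n. uu n i) = 0"
proof -
  have "(\<Sum>i<n. uu n i) = (\<Sum>i<2 * (n div 2). (-1) ^ i * sqrt (real n / real (2 * (n div 2))))"
    unfolding uu_def by (rule sum_if_less) simp
  also have "\<dots> = 0" by (rule sum_alt)
  finally show ?thesis .
qed

lemma neg1: "((-1::real) ^ x)\<^sup>2 = 1" by (cases "even x") simp_all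

lemma uu_sq: assumes "n \<ge> 2" shows "(\<Sum>i<n. (uu n i)\<^sup>2) = real n"
proof -
  define m where "m = 2 * (n div 2)"
  have m0: "m > 0" unfolding m_def using assms by auto
  have "(\<Sum>i<n. (uu n i)\<^sup>2) = (\<Sum>i<n. if i < m then real n / real m else 0)"
    unfolding uu_def m_def[symmetric] by (intro sum.cong) (auto simp: power_mult_distrib neg1)
  also have "\<dots> = (\<Sum>i<m. real n / real m)" by (rule sum_if_less) (simp add: m_def)
  also have "\<dots> = real n" using m0 by simp
  finally show ?thesis .
qed

lemma uu_bound: assumes "n \<ge> 2" shows "\<bar>uu n i\<bar> \<le> sqrt 2"
proof -
  define m where "m = 2 * (n div 2)"
  have "n \<le> 2 * m" unfolding m_def using assms by linarith
  then have "real n \<le> 2 * real m" by linarith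
  moreover have m0: "m > 0" unfolding m_def using assms by auto
  ultimately have "real n / real m \<le> 2" by (simp add: divide_le_eq)
  then have "sqrt (real n / real m) \<le> sqrt 2" by (rule real_sqrt_le_mono)
  then show ?thesis unfolding uu_def m_def[symmetric] by (auto simp: abs_mult)
qed

lemma diff_aux:
  fixes a b c z :: real
  shows "a * z\<^sup>2 + b * z + c - (a + c) = a * (z\<^sup>2 - 1) + b * z"
  by (simp add: algebra_simps)

lemma diff_formula:
  fixes S1 S2 r x1 x2 z :: real
  assumes "S1 > 0" "S2 > 0" "r \<in> {-1..1}"
  shows "j1 S1 S2 r x1 x2 (x1 + x2 + z) - Ej1 S1 S2 r x1 x2 =
     ((1 / (1 + S1 * (1 - r\<^sup>2)) - 1) / 2) * (z\<^sup>2 - 1)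
     + ((x1 - x2 * r * sqrt (S1 / S2)) / (1 + S1 * (1 - r\<^sup>2))) * z"
  unfolding j1_formula[OF assms] Ej1_formula[OF assms] by (rule diff_aux)

lemma d_rewrite:
  fixes S1 S2 r t s u :: real
  assumes "S1 > 0" "S2 > 0"
  shows "sqrt S1 - sqrt S2 * (t + s * u) * r * sqrt (S1 / S2) = sqrt S1 * (1 - r * t - r * s * u)"
proof -
  have "sqrt S2 * sqrt (S1 / S2) = sqrt S1" using assms by (simp add: real_sqrt_mult[symmetric])
  then have "sqrt S2 * (t + s * u) * r * sqrt (S1 / S2) = sqrt S1 * ((t + s * u) * r)"
    by (metis mult.commute mult.left_commute)
  then show ?thesis by (simp add: algebra_simps)
qed

theorem lemma5:
  fixes S1 S2 :: real and \<rho> \<rho>t :: "nat \<Rightarrow> real"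
  assumes "S1 > 0" and "S2 > 0"
    and "\<And>n. \<rho> n \<in> {-1..1}" and "\<And>n. \<rho>t n \<in> {-1..1}"
    and "\<rho> \<longlonglongrightarrow> 1" and "\<rho>t \<longlonglongrightarrow> 1"
    and "(\<lambda>n. 1 - \<rho>t n) \<in> \<Theta>(\<lambda>n. 1 - \<rho> n)"
  shows "\<exists>X1 X2 :: nat \<Rightarrow> nat \<Rightarrow> real.
           (\<forall>\<^sub>F n in sequentially.
              sqnorm n (X1 n) = real n * S1 \<and> sqnorm n (X2 n) = real n * S2 \<and>
              inprod n (X1 n) (X2 n) / (sqrt (sqnorm n (X1 n)) * sqrt (sqnorm n (X2 n))) = \<rho>t n) \<and>
           (\<lambda>n. T1 S1 S2 (\<rho> n) n (X1 n) (X2 n)) \<in> O(\<lambda>n. (1 - \<rho>t n) / sqrt (real n))"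
proof -
  note S1 = assms(1) and S2 = assms(2)
  define s where "s n = sqrt (1 - (\<rho>t n)\<^sup>2)" for n
  define X1 where "X1 = (\<lambda>(n::nat) (i::nat). sqrt S1)"
  define X2 where "X2 = (\<lambda>n i. sqrt S2 * (\<rho>t n + s n * uu n i))"
  have t2: "(\<rho>t n)\<^sup>2 \<le> 1" for n using assms(4)[of n] by (simp add: abs_square_le_1 abs_le_iff)
  have ss: "(s n)\<^sup>2 = 1 - (\<rho>t n)\<^sup>2" for n unfolding s_def using t2[of n] by simp
  have sq1: "sqnorm n (X1 n) = real n * S1" for n
    unfolding sqnorm_def X1_def using S1 by simp
  have sq2: "sqnorm n (X2 n) = real n * S2" if n2: "n \<ge> 2" for n
  proof -
    have "sqnorm n (X2 n) = (\<Sum>i<n. S2 * ((\<rho>t n)\<^sup>2 + (2 * \<rho>t n * s n) * uu n i + (s n)\<^sup>2 * (uu n i)\<^sup>2))"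
      unfolding sqnorm_def X2_def using S2
      by (intro sum.cong) (simp_all add: power_mult_distrib power2_sum algebra_simps)
    also have "\<dots> = S2 * (\<Sum>i<n. (\<rho>t n)\<^sup>2 + (2 * \<rho>t n * s n) * uu n i + (s n)\<^sup>2 * (uu n i)\<^sup>2)"
      by (simp add: sum_distrib_left)
    also have "\<dots> = S2 * (real n * (\<rho>t n)\<^sup>2 + (2 * \<rho>t n * s n) * (\<Sum>i<n. uu n i) + (s n)\<^sup>2 * (\<Sum>i<n. (uu n i)\<^sup>2))"
      by (simp add: sum.distrib sum_distrib_left)
    also have "\<dots> = S2 * (real n * (\<rho>t n)\<^sup>2 + (s n)\<^sup>2 * real n)"
      using uu_sum uu_sq[OF n2] by simp
    also have "\<dots> = real n * S2" unfolding ss by (simp add: algebra_simps)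
    finally show ?thesis .
  qed
  have ip: "inprod n (X1 n) (X2 n) = real n * (sqrt S1 * sqrt S2) * \<rho>t n" for n
  proof -
    have "inprod n (X1 n) (X2 n) = (\<Sum>i<n. sqrt S1 * sqrt S2 * \<rho>t n + (sqrt S1 * sqrt S2 * s n) * uu n i)"
      unfolding inprod_def X1_def X2_def by (intro sum.cong) (simp_all add: algebra_simps)
    also have "\<dots> = real n * (sqrt S1 * sqrt S2) * \<rho>t n"
      using uu_sum[of n] by (simp add: sum.distrib sum_distrib_left[symmetric])
    finally show ?thesis .
  qed
  have geo: "\<forall>\<^sub>F n in sequentially.
              sqnorm n (X1 n) = real n * S1 \<and> sqnorm n (X2 n) = real n * S2 \<and>
              inprod n (X1 n) (X2 n) / (sqrt (sqnorm n (X1 n)) * sqrt (sqnorm n (X2 n))) = \<rho>t n"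
  proof (rule eventually_sequentiallyI[of 2])
    fix n :: nat assume n2: "n \<ge> 2"
    have "sqrt (real n * S1) * sqrt (real n * S2) = real n * (sqrt S1 * sqrt S2)"
      by (simp add: real_sqrt_mult)
    then have "inprod n (X1 n) (X2 n) / (sqrt (sqnorm n (X1 n)) * sqrt (sqnorm n (X2 n)))
       = (real n * (sqrt S1 * sqrt S2)) * \<rho>t n / (real n * (sqrt S1 * sqrt S2))"
      unfolding sq1[of n] sq2[OF n2] ip[of n] by simp
    also have "\<dots> = \<rho>t n"
    proof -
      have "real n * (sqrt S1 * sqrt S2) > 0" using n2 S1 S2 by simp
      then have "real n * (sqrt S1 * sqrt S2) \<noteq> 0" by linarith
      then show ?thesis by (rule nonzero_mult_div_cancel_left)
    qed
    finally have "inprod n (X1 n) (X2 n) / (sqrt (sqnorm n (X1 n)) * sqrt (sqnorm n (X2 n))) = \<rho>t n" .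
    then show "sqnorm n (X1 n) = real n * S1 \<and> sqnorm n (X2 n) = real n * S2 \<and>
              inprod n (X1 n) (X2 n) / (sqrt (sqnorm n (X1 n)) * sqrt (sqnorm n (X2 n))) = \<rho>t n"
      using sq1[of n] sq2[OF n2] by (intro conjI)
  qed
  have "(\<lambda>n. 1 - \<rho> n) \<in> O(\<lambda>n. 1 - \<rho>t n)"
    using assms(7) by (simp add: bigtheta_sym bigthetaD1)
  then obtain K where K: "K > 0" and evK: "\<forall>\<^sub>F n in sequentially. norm (1 - \<rho> n) \<le> K * norm (1 - \<rho>t n)"
    by (rule landau_o.bigE)
  define M0 where "M0 = S1 * K * sqrt 2 + sqrt S1 * (K * sqrt 2 + sqrt 2 + 2)"
  have M0: "M0 \<ge> 0" unfolding M0_def using S1 K by simp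
  define L where "L = 28 * M0 ^ 3 * sqrt 2"
  have bnd: "\<forall>\<^sub>F n in sequentially. norm (T1 S1 S2 (\<rho> n) n (X1 n) (X2 n)) \<le> L * norm ((1 - \<rho>t n) / sqrt (real n))"
    using evK eventually_ge_at_top[of "2::nat"]
  proof eventually_elim
    case (elim n)
    have n2: "n \<ge> 2" using elim(2) .
    define r where "r = \<rho> n"
    define t where "t = \<rho>t n"
    define e where "e = 1 - t"
    define sv where "sv = 1 + S1 * (1 - r\<^sup>2)"
    define k where "k = 1 / sqrt (real n)"
    have r: "r \<in> {-1..1}" unfolding r_def by (rule assms(3))
    have t: "t \<in> {-1..1}" unfolding t_def by (rule assms(4))
    have e0: "e \<ge> 0" "e \<le> 2" unfolding e_def using t by auto
    have rK: "1 - r \<le> K * (1 - t)"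
      using elim(1) t unfolding r_def t_def by (simp add: abs_if split: if_splits)
    have k0: "k > 0" unfolding k_def using n2 by simp
    define Bi where "Bi i = (X1 n i - X2 n i * r * sqrt (S1 / S2)) / sv" for i
    have ABi: "\<bar>(1 / sv - 1) / 2\<bar> + \<bar>Bi i\<bar> \<le> M0 * sqrt e" for i
    proof -
      have "X1 n i - X2 n i * r * sqrt (S1 / S2) = sqrt S1 * (1 - r * t - r * s n * uu n i)"
        unfolding X1_def X2_def t_def by (rule d_rewrite[OF S1 S2])
      then have "Bi i = sqrt S1 * (1 - r * t - r * sqrt (1 - t\<^sup>2) * uu n i) / (1 + S1 * (1 - r\<^sup>2))"
        unfolding Bi_def sv_def s_def t_def by simp
      then show ?thesis
        using AB_bound[OF S1 K r t uu_bound[OF n2] rK] unfolding M0_def e_def sv_def by simp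
    qed
    have trm: "(LINT z|lborel. std_normal_density z *
        \<bar>(1 / sqrt (real n)) * (j1 S1 S2 r (X1 n i) (X2 n i) (X1 n i + X2 n i + z)
                                 - Ej1 S1 S2 r (X1 n i) (X2 n i))\<bar> ^ 3)
        \<le> 28 * (k * (M0 * sqrt e)) ^ 3" for i
    proof -
      have "(LINT z|lborel. std_normal_density z *
        \<bar>(1 / sqrt (real n)) * (j1 S1 S2 r (X1 n i) (X2 n i) (X1 n i + X2 n i + z)
                                 - Ej1 S1 S2 r (X1 n i) (X2 n i))\<bar> ^ 3)
        = (LINT z|lborel. std_normal_density z * \<bar>k * (((1 / sv - 1) / 2) * (z\<^sup>2 - 1) + Bi i * z)\<bar> ^ 3)"
        unfolding diff_formula[OF S1 S2 r] k_def Bi_def sv_def ..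
      also have "\<dots> \<le> 28 * (\<bar>k\<bar> * (\<bar>(1 / sv - 1) / 2\<bar> + \<bar>Bi i\<bar>)) ^ 3"
        by (rule cube_bound)
      also have "\<dots> \<le> 28 * (k * (M0 * sqrt e)) ^ 3"
        using k0 ABi[of i] by (intro mult_left_mono power_mono mult_left_mono) auto
      finally show ?thesis .
    qed
    have T1nn: "T1 S1 S2 (\<rho> n) n (X1 n) (X2 n) \<ge> 0"
      unfolding T1_def by (intro sum_nonneg integral_nonneg) simp
    have "T1 S1 S2 (\<rho> n) n (X1 n) (X2 n) \<le> (\<Sum>i<n. 28 * (k * (M0 * sqrt e)) ^ 3)"
      unfolding T1_def r_def[symmetric] by (intro sum_mono trm)
    also have "\<dots> = real n * 28 * (k * (M0 * sqrt e)) ^ 3" by simp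
    also have "\<dots> = 28 * M0 ^ 3 * (sqrt e * (e / sqrt (real n)))"
    proof -
      have sn: "sqrt (real n) > 0" using n2 by simp
      have "real n = sqrt (real n) * sqrt (real n)" by simp
      moreover have "(sqrt e) ^ 3 = sqrt e * e" using e0 by (simp add: power3_eq_cube)
      ultimately show ?thesis unfolding k_def using sn
        by (simp add: power_mult_distrib power3_eq_cube field_simps)
    qed
    also have "\<dots> \<le> 28 * M0 ^ 3 * (sqrt 2 * (e / sqrt (real n)))"
      using e0 M0 by (intro mult_left_mono mult_right_mono real_sqrt_le_mono) auto
    also have "\<dots> = L * norm ((1 - \<rho>t n) / sqrt (real n))"
      unfolding L_def e_def t_def using e0 unfolding e_def t_def by simp
    finally show ?case using T1nn by simp
  qed
  have "(\<lambda>n. T1 S1 S2 (\<rho> n) n (X1 n) (X2 n)) \<in> O(\<lambda>n. (1 - \<rho>t n) / sqrt (real n))"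
    using bnd by (rule bigoI)
  with geo show ?thesis by blast
qed

end
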